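(* Let $\mathrm{Alt}[x,y,z]$ be the free alternative algebra over a field on three free generators $x,y,z$. Then its Veronese $2$-subalgebra $V^{(2)}(\mathrm{Alt}[x,y,z])$ is not free in the variety $\mathrm{Alt}_3$.
   Context: An algebra is alternative if it satisfies $(x,x,y)=(y,x,x)=0$, where $(a,b,c)=(ab)c-a(bc)$. $\mathrm{Alt}_3$ is the subvariety of the variety of alternative algebras generated by the free alternative algebra of rank $3$. The Veronese $2$-subalgebra $V^{(2)}(\mathrm{Alt}[x,y,z])$ is the span of all monomials in $x,y,z$ of even length. An algebra is free in $\mathrm{Alt}_3$ if it is isomorphic to a free algebra of the variety $\mathrm{Alt}_3$ on some set of generators. *)

theory Defs
  imports Main "HOL-Library.Poly_Mapping"
begin

datatype 'v nmon = NVar 'v | NMul "'v nmon" "'v nmon"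

fun nmon_deg :: "'v nmon \<Rightarrow> nat" where
  "nmon_deg (NVar v) = 1"
| "nmon_deg (NMul a b) = nmon_deg a + nmon_deg b"

fun nmon_vars :: "'v nmon \<Rightarrow> 'v set" where
  "nmon_vars (NVar v) = {v}"
| "nmon_vars (NMul a b) = nmon_vars a \<union> nmon_vars b"

text \<open>Elements of the free nonassociative algebra K{V}: finite K-linear combinations of monomials.\<close>
type_synonym ('k, 'v) npoly = "'v nmon \<Rightarrow>\<^sub>0 'k"

definition npvar :: "'v \<Rightarrow> ('k::field, 'v) npoly" where
  "npvar v = Poly_Mapping.single (NVar v) 1"

definition npsmult :: "'k::field \<Rightarrow> ('k, 'v) npoly \<Rightarrow> ('k, 'v) npoly" where
  "npsmult c p = Poly_Mapping.map (\<lambda>a. c * a) p"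

definition npmult :: "('k::field, 'v) npoly \<Rightarrow> ('k, 'v) npoly \<Rightarrow> ('k, 'v) npoly" where
  "npmult p q = (\<Sum>(a, b) \<in> Poly_Mapping.keys p \<times> Poly_Mapping.keys q.
      Poly_Mapping.single (NMul a b) (Poly_Mapping.lookup p a * Poly_Mapping.lookup q b))"

definition npassoc :: "('k::field, 'v) npoly \<Rightarrow> ('k, 'v) npoly \<Rightarrow> ('k, 'v) npoly \<Rightarrow> ('k, 'v) npoly" where
  "npassoc a b c = npmult (npmult a b) c - npmult a (npmult b c)"

definition npvars :: "('k::field, 'v) npoly \<Rightarrow> 'v set" where
  "npvars p = (\<Union>m \<in> Poly_Mapping.keys p. nmon_vars m)"

fun nmon_eval :: "('v \<Rightarrow> ('k::field, 'w) npoly) \<Rightarrow> 'v nmon \<Rightarrow> ('k, 'w) npoly" where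
  "nmon_eval s (NVar v) = s v"
| "nmon_eval s (NMul a b) = npmult (nmon_eval s a) (nmon_eval s b)"

definition npeval :: "('v \<Rightarrow> ('k::field, 'w) npoly) \<Rightarrow> ('k, 'v) npoly \<Rightarrow> ('k, 'w) npoly" where
  "npeval s p = (\<Sum>m \<in> Poly_Mapping.keys p. npsmult (Poly_Mapping.lookup p m) (nmon_eval s m))"

text \<open>The two-sided ideal of K{V} generated by all associators (a,a,b) and (b,a,a).
  The quotient K{V}/alt_ideal is the free alternative algebra Alt[V].\<close>
inductive_set alt_ideal :: "('k::field, 'v) npoly set" where
  left_alt: "npassoc a a b \<in> alt_ideal"
| right_alt: "npassoc b a a \<in> alt_ideal"
| zero: "0 \<in> alt_ideal"
| add: "p \<in> alt_ideal \<Longrightarrow> q \<in> alt_ideal \<Longrightarrow> p + q \<in> alt_ideal"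
| smult: "p \<in> alt_ideal \<Longrightarrow> npsmult c p \<in> alt_ideal"
| mult_right: "p \<in> alt_ideal \<Longrightarrow> npmult p r \<in> alt_ideal"
| mult_left: "p \<in> alt_ideal \<Longrightarrow> npmult r p \<in> alt_ideal"

datatype var3 = X | Y | Z

text \<open>Veronese 2-subalgebra of Alt[x,y,z], represented as the set of representatives in K{x,y,z}
  of elements of Alt[x,y,z] lying in the span of the (images of) monomials of even length.\<close>
definition veronese2 :: "('k::field, var3) npoly set" where
  "veronese2 = {p. \<exists>q. p - q \<in> alt_ideal \<and> (\<forall>m \<in> Poly_Mapping.keys q. even (nmon_deg m))}"

text \<open>Identities of the variety Alt_3 (generated by Alt[x,y,z]): nonassociative polynomials
  vanishing under every substitution of elements of Alt[x,y,z].\<close>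
definition Alt3_identity :: "('k::field, 'w) npoly \<Rightarrow> bool" where
  "Alt3_identity f \<longleftrightarrow> (\<forall>s :: 'w \<Rightarrow> ('k, var3) npoly. npeval s f \<in> alt_ideal)"

text \<open>A subalgebra V of Alt[x,y,z] (given by a set of representatives) is free in Alt_3 iff it
  has a subset X such that X generates V and the canonical homomorphism from the free
  Alt_3-algebra on X, i.e. K{X} modulo the Alt_3 identities, onto V is injective.\<close>
definition free_in_Alt3 :: "('k::field, var3) npoly set \<Rightarrow> bool" where
  "free_in_Alt3 V \<longleftrightarrow>
     (\<exists>G \<subseteq> V.
        (\<forall>p \<in> V. \<exists>f :: ('k, ('k, var3) npoly) npoly.
            npvars f \<subseteq> G \<and> p - npeval (\<lambda>v. v) f \<in> alt_ideal) \<and>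
        (\<forall>f :: ('k, ('k, var3) npoly) npoly.
            npvars f \<subseteq> G \<longrightarrow> npeval (\<lambda>v. v) f \<in> alt_ideal \<longrightarrow> Alt3_identity f))"

end

theory Submission
  imports Defs
begin


lemma lookup_npsmult [simp]: "Poly_Mapping.lookup (npsmult c p) m = c * Poly_Mapping.lookup p m"
  unfolding npsmult_def by (simp add: map.rep_eq when_def)

lemma lookup_npmult:
  "Poly_Mapping.lookup (npmult p q) m =
     (case m of NVar v \<Rightarrow> 0 | NMul a b \<Rightarrow> Poly_Mapping.lookup p a * Poly_Mapping.lookup q b)"
proof (cases m)
  case (NVar v)
  then show ?thesis unfolding npmult_def by (simp add: lookup_sum lookup_single case_prod_beta)
next
  case (NMul a b)
  have "Poly_Mapping.lookup (npmult p q) m =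
     (\<Sum>x\<in>Poly_Mapping.keys p \<times> Poly_Mapping.keys q.
        (if x = (a, b) then Poly_Mapping.lookup p (fst x) * Poly_Mapping.lookup q (snd x) else 0))"
    unfolding npmult_def NMul lookup_sum
    by (rule sum.cong) (simp_all add: lookup_single when_def case_prod_beta prod_eq_iff)
  also have "\<dots> = Poly_Mapping.lookup p a * Poly_Mapping.lookup q b"
    by (subst sum.delta) (auto simp: in_keys_iff)
  finally show ?thesis using NMul by simp
qed

lemma lookup_npmult_NVar [simp]: "Poly_Mapping.lookup (npmult p q) (NVar v) = 0"
  by (simp add: lookup_npmult)
lemma lookup_npmult_NMul [simp]:
  "Poly_Mapping.lookup (npmult p q) (NMul a b) = Poly_Mapping.lookup p a * Poly_Mapping.lookup q b"
  by (simp add: lookup_npmult)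

lemma npmult_add_left: "npmult (p + q) r = npmult p r + npmult q r"
  by (rule poly_mapping_eqI) (simp add: lookup_npmult lookup_add distrib_right split: nmon.split)
lemma npmult_add_right: "npmult r (p + q) = npmult r p + npmult r q"
  by (rule poly_mapping_eqI) (simp add: lookup_npmult lookup_add distrib_left split: nmon.split)
lemma npmult_diff_left: "npmult (p - q) r = npmult p r - npmult q r"
  by (rule poly_mapping_eqI) (simp add: lookup_npmult lookup_minus left_diff_distrib split: nmon.split)
lemma npmult_diff_right: "npmult r (p - q) = npmult r p - npmult r q"
  by (rule poly_mapping_eqI) (simp add: lookup_npmult lookup_minus right_diff_distrib split: nmon.split)
lemma npmult_uminus_left: "npmult (- p) r = - npmult p r"
  by (rule poly_mapping_eqI) (simp add: lookup_npmult split: nmon.split)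
lemma npmult_uminus_right: "npmult r (- p) = - npmult r p"
  by (rule poly_mapping_eqI) (simp add: lookup_npmult split: nmon.split)
lemma npmult_zero_left [simp]: "npmult 0 r = 0"
  by (rule poly_mapping_eqI) (simp add: lookup_npmult split: nmon.split)
lemma npmult_zero_right [simp]: "npmult r 0 = 0"
  by (rule poly_mapping_eqI) (simp add: lookup_npmult split: nmon.split)
lemma npmult_smult_left: "npmult (npsmult c p) r = npsmult c (npmult p r)"
  by (rule poly_mapping_eqI) (simp add: lookup_npmult split: nmon.split)
lemma npmult_smult_right: "npmult r (npsmult c p) = npsmult c (npmult r p)"
  by (rule poly_mapping_eqI) (simp add: lookup_npmult split: nmon.split)

lemmas npmult_distribs = npmult_add_left npmult_add_right npmult_diff_left npmult_diff_right
  npmult_uminus_left npmult_uminus_right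


section \<open>Ideal closure\<close>

abbreviation I where "I \<equiv> alt_ideal"

lemma npsmult_minus_one: "npsmult (-1) p = - p"
  by (rule poly_mapping_eqI) simp

lemma I_uminus: "p \<in> alt_ideal \<Longrightarrow> - p \<in> alt_ideal"
  by (metis alt_ideal.smult npsmult_minus_one)
lemma I_add: "p \<in> alt_ideal \<Longrightarrow> q \<in> alt_ideal \<Longrightarrow> p + q \<in> alt_ideal"
  by (rule alt_ideal.add)
lemma I_diff: "p \<in> alt_ideal \<Longrightarrow> q \<in> alt_ideal \<Longrightarrow> p - q \<in> alt_ideal"
  using I_add[OF _ I_uminus] by (metis diff_conv_add_uminus)
lemma I_ml: "p \<in> alt_ideal \<Longrightarrow> npmult r p \<in> alt_ideal"
  by (rule alt_ideal.mult_left)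
lemma I_mr: "p \<in> alt_ideal \<Longrightarrow> npmult p r \<in> alt_ideal"
  by (rule alt_ideal.mult_right)
lemma I_aab: "npassoc a a b \<in> alt_ideal" by (rule alt_ideal.left_alt)
lemma I_baa: "npassoc b a a \<in> alt_ideal" by (rule alt_ideal.right_alt)

lemma I_eq: "p \<in> alt_ideal \<Longrightarrow> p = q \<Longrightarrow> q \<in> alt_ideal" by simp

lemma alt12: "npassoc a b c + npassoc b a c \<in> alt_ideal"
proof -
  have "npassoc a b c + npassoc b a c =
        npassoc (a + b) (a + b) c - npassoc a a c - npassoc b b c"
    by (simp add: npassoc_def npmult_distribs algebra_simps)
  then show ?thesis by (metis I_diff I_aab)
qed

lemma alt23: "npassoc a b c + npassoc a c b \<in> alt_ideal"
proof -
  have "npassoc a b c + npassoc a c b =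
        npassoc a (b + c) (b + c) - npassoc a b b - npassoc a c c"
    by (simp add: npassoc_def npmult_distribs algebra_simps)
  then show ?thesis by (metis I_diff I_baa)
qed

lemma alt13: "npassoc a b c + npassoc c b a \<in> alt_ideal"
proof -
  have "npassoc a b c + npassoc c b a =
        (npassoc a b c + npassoc b a c) - (npassoc b a c + npassoc b c a) + (npassoc b c a + npassoc c b a)"
    by simp
  then show ?thesis by (metis I_diff I_add alt12 alt23)
qed

lemma cyc: "npassoc a b c - npassoc b c a \<in> alt_ideal"
proof -
  have "npassoc a b c - npassoc b c a =
        (npassoc a b c + npassoc b a c) - (npassoc b a c + npassoc b c a)"
    by simp
  then show ?thesis by (metis I_diff alt12 alt23)
qed

lemma flex: "npassoc a b a \<in> alt_ideal"
proof -
  have "npassoc a b a = (npassoc a b a + npassoc b a a) - npassoc b a a" by simp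
  then show ?thesis by (metis I_diff alt12 I_baa)
qed

lemma teich:
  "npassoc (npmult a b) c d - npassoc a (npmult b c) d + npassoc a b (npmult c d)
     - npmult a (npassoc b c d) - npmult (npassoc a b c) d = 0"
  by (simp add: npassoc_def npmult_distribs algebra_simps)


lemma moufang1:
  "npassoc x y (npmult x z) - npmult (npassoc x y z) x \<in> alt_ideal"
proof -
  define g1 where "g1 = npassoc x y (npmult x z) + npassoc x (npmult x z) y"
  define g2 where "g2 = npassoc (npmult x y) z x + npassoc x z (npmult x y)"
  define g3 where "g3 = npassoc x z (npmult x y) + npassoc z x (npmult x y)"
  define g4 where "g4 = npassoc x (npmult y z) x"
  define g5 where "g5 = npassoc (npmult z x) x y - npassoc x y (npmult z x)"
  define g6 where "g6 = npmult x (npassoc y z x + npassoc x z y)"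
  define g7 where "g7 = npassoc (npmult x x) z y + npassoc z (npmult x x) y"
  define g8 where "g8 = npmult z (npassoc x x y)"
  define g9 where "g9 = npmult (npassoc z x x) y"
  define g10 where "g10 = npassoc x x (npmult z y)"
  define g11 where "g11 = npmult (npassoc x x z) y"
  have h: "g1 \<in> I" "g2 \<in> I" "g3 \<in> I" "g4 \<in> I" "g5 \<in> I" "g6 \<in> I" "g7 \<in> I"
    "g8 \<in> I" "g9 \<in> I" "g10 \<in> I" "g11 \<in> I"
    unfolding g1_def g2_def g3_def g4_def g5_def g6_def g7_def g8_def g9_def g10_def g11_def
    by (auto intro: alt12 alt23 alt13 cyc flex I_ml I_mr I_aab I_baa)
  have e: "npassoc x y (npmult x z) - npmult (npassoc x y z) x =
     g1 - g2 + g3 + g4 + g5 + g6 - g7 - g8 - g9 - g10 + g11"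
    unfolding g1_def g2_def g3_def g4_def g5_def g6_def g7_def g8_def g9_def g10_def g11_def
    by (simp add: npassoc_def npmult_distribs algebra_simps)
  show ?thesis unfolding e using h by (intro I_add I_diff)
qed


lemma moufang2:
  "npassoc x (npmult x w) z - npmult (npassoc x w z) x \<in> alt_ideal"
proof -
  define g1 where "g1 = npassoc x (npmult x w) z + npassoc x z (npmult x w)"
  define g2 where "g2 = npassoc x z (npmult x w) - npmult (npassoc x z w) x"
  define g3 where "g3 = npmult (npassoc x z w + npassoc x w z) x"
  have h: "g1 \<in> I" "g2 \<in> I" "g3 \<in> I"
    unfolding g1_def g2_def g3_def
    by (auto intro: alt23 moufang1 I_mr)
  have e: "npassoc x (npmult x w) z - npmult (npassoc x w z) x = g1 - g2 - g3"
    unfolding g1_def g2_def g3_def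
    by (simp add: npmult_distribs algebra_simps)
  show ?thesis unfolding e using h by (intro I_add I_diff)
qed

lemma moufang3:
  "npassoc x y (npmult y z) - npmult (npassoc x y z) y \<in> alt_ideal"
proof -
  define g1 where "g1 = npassoc x y (npmult y z) + npassoc y x (npmult y z)"
  define g2 where "g2 = npassoc y x (npmult y z) - npmult (npassoc y x z) y"
  define g3 where "g3 = npmult (npassoc y x z + npassoc x y z) y"
  have h: "g1 \<in> I" "g2 \<in> I" "g3 \<in> I"
    unfolding g1_def g2_def g3_def
    by (auto intro: alt12 moufang1 I_mr)
  have e: "npassoc x y (npmult y z) - npmult (npassoc x y z) y = g1 - g2 - g3"
    unfolding g1_def g2_def g3_def
    by (simp add: npmult_distribs algebra_simps)
  show ?thesis unfolding e using h by (intro I_add I_diff)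
qed

lemma artin_inst:
  "npassoc (npmult x x) (npmult x y) (npmult y y) \<in> alt_ideal"
proof -
  have ha: "npassoc x (npmult x y) (npmult y y) \<in> I"
  proof -
    define g1 where "g1 = npassoc x (npmult x y) (npmult y y) - npmult (npassoc x y (npmult y y)) x"
    define g2 where "g2 = npmult (npassoc x y (npmult y y) - npmult (npassoc x y y) y) x"
    define g3 where "g3 = npmult (npmult (npassoc x y y) y) x"
    have h: "g1 \<in> I" "g2 \<in> I" "g3 \<in> I"
      unfolding g1_def g2_def g3_def
      by (auto intro: moufang2 moufang3 I_mr I_baa)
    have e: "npassoc x (npmult x y) (npmult y y) = g1 + g2 + g3"
      unfolding g1_def g2_def g3_def
      by (simp add: npmult_distribs algebra_simps)
    show ?thesis unfolding e using h by (intro I_add I_diff)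
  qed
  have hb: "npassoc x (npmult x (npmult x y)) (npmult y y) \<in> I"
  proof -
    define g1 where "g1 = npassoc x (npmult x (npmult x y)) (npmult y y) - npmult (npassoc x (npmult x y) (npmult y y)) x"
    define g2 where "g2 = npmult (npassoc x (npmult x y) (npmult y y)) x"
    have h: "g1 \<in> I" "g2 \<in> I"
      unfolding g1_def g2_def
      by (auto intro: moufang2 ha I_mr)
    have e: "npassoc x (npmult x (npmult x y)) (npmult y y) = g1 + g2"
      unfolding g1_def g2_def by simp
    show ?thesis unfolding e using h by (intro I_add I_diff)
  qed
  define g1 where "g1 = npassoc x (npmult x (npmult x y)) (npmult y y)"
  define g2 where "g2 = npassoc x x (npmult (npmult x y) (npmult y y))"
  define g3 where "g3 = npmult x (npassoc x (npmult x y) (npmult y y))"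
  define g4 where "g4 = npmult (npassoc x x (npmult x y)) (npmult y y)"
  have h: "g1 \<in> I" "g2 \<in> I" "g3 \<in> I" "g4 \<in> I"
    unfolding g1_def g2_def g3_def g4_def
    by (auto intro: hb ha I_ml I_mr I_aab)
  have e: "npassoc (npmult x x) (npmult x y) (npmult y y) = g1 - g2 + g3 + g4"
    unfolding g1_def g2_def g3_def g4_def
    by (simp add: npassoc_def npmult_distribs algebra_simps)
  show ?thesis unfolding e using h by (intro I_add I_diff)
qed


section \<open>Low-degree invariants of the ideal\<close>

definition lin :: "('k::field, 'v) npoly \<Rightarrow> 'v \<Rightarrow> 'k" where
  "lin p u = Poly_Mapping.lookup p (NVar u)"
definition quad :: "('k::field, 'v) npoly \<Rightarrow> 'v \<Rightarrow> 'v \<Rightarrow> 'k" where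
  "quad p u v = Poly_Mapping.lookup p (NMul (NVar u) (NVar v))"
definition cub :: "('k::field, 'v) npoly \<Rightarrow> 'v \<Rightarrow> 'v \<Rightarrow> 'v \<Rightarrow> 'k" where
  "cub p u v w = Poly_Mapping.lookup p (NMul (NMul (NVar u) (NVar v)) (NVar w))"
definition Dfun :: "('k::field, var3) npoly \<Rightarrow> 'k" where
  "Dfun p = cub p X Y Z - cub p Y X Z - cub p X Z Y + cub p Y Z X + cub p Z X Y - cub p Z Y X"

lemma lin_npmult [simp]: "lin (npmult p q) u = 0" by (simp add: lin_def)
lemma quad_npmult [simp]: "quad (npmult p q) u v = lin p u * lin q v" by (simp add: quad_def lin_def)
lemma cub_npmult [simp]: "cub (npmult p q) u v w = quad p u v * lin q w" by (simp add: quad_def lin_def cub_def)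
lemma lin_minus [simp]: "lin (p - q) u = lin p u - lin q u" by (simp add: lin_def lookup_minus)
lemma quad_minus [simp]: "quad (p - q) u v = quad p u v - quad q u v" by (simp add: quad_def lookup_minus)
lemma cub_minus [simp]: "cub (p - q) u v w = cub p u v w - cub q u v w" by (simp add: cub_def lookup_minus)

lemma Dfun_npassoc:
  "Dfun (npassoc a b c) =
     lin a X * lin b Y * lin c Z - lin a Y * lin b X * lin c Z - lin a X * lin b Z * lin c Y
   + lin a Y * lin b Z * lin c X + lin a Z * lin b X * lin c Y - lin a Z * lin b Y * lin c X"
  by (simp add: Dfun_def npassoc_def)

lemma lin_npassoc [simp]: "lin (npassoc a b c) u = 0" by (simp add: npassoc_def)
lemma quad_npassoc [simp]: "quad (npassoc a b c) u v = 0" by (simp add: npassoc_def)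

lemma lin_add [simp]: "lin (p + q) u = lin p u + lin q u" by (simp add: lin_def lookup_add)
lemma quad_add [simp]: "quad (p + q) u v = quad p u v + quad q u v" by (simp add: quad_def lookup_add)
lemma cub_add [simp]: "cub (p + q) u v w = cub p u v w + cub q u v w" by (simp add: cub_def lookup_add)
lemma lin_smult [simp]: "lin (npsmult c p) u = c * lin p u" by (simp add: lin_def)
lemma quad_smult [simp]: "quad (npsmult c p) u v = c * quad p u v" by (simp add: quad_def)
lemma cub_smult [simp]: "cub (npsmult c p) u v w = c * cub p u v w" by (simp add: cub_def)
lemma Dfun_add: "Dfun (p + q) = Dfun p + Dfun q" by (simp add: Dfun_def algebra_simps)
lemma Dfun_smult: "Dfun (npsmult c p) = c * Dfun p" by (simp add: Dfun_def algebra_simps)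

lemma I_lowdeg:
  assumes "(p :: ('k::field, var3) npoly) \<in> alt_ideal"
  shows "(\<forall>u. lin p u = 0) \<and> (\<forall>u v. quad p u v = 0) \<and> Dfun p = 0"
  using assms
proof (induction rule: alt_ideal.induct)
  case (left_alt a b)
  then show ?case by (simp add: Dfun_npassoc algebra_simps)
next
  case (right_alt b a)
  then show ?case by (simp add: Dfun_npassoc algebra_simps)
next
  case zero
  then show ?case by (simp add: lin_def quad_def Dfun_def cub_def)
next
  case (add p q)
  then show ?case by (simp add: Dfun_add)
next
  case (smult p c)
  then show ?case by (simp add: Dfun_smult)
next
  case (mult_right p r)
  then show ?case by (simp add: Dfun_def)
next
  case (mult_left p r)
  then show ?case by (simp add: Dfun_def)
qed


section \<open>Evaluation is a homomorphism\<close>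

lemma npsmult_zero [simp]: "npsmult 0 p = 0" by (rule poly_mapping_eqI) simp
lemma npsmult_zero2 [simp]: "npsmult c 0 = 0" by (rule poly_mapping_eqI) simp
lemma npsmult_add_scalar: "npsmult (a + b) p = npsmult a p + npsmult b p"
  by (rule poly_mapping_eqI) (simp add: lookup_add algebra_simps)
lemma npsmult_diff_scalar: "npsmult (a - b) p = npsmult a p - npsmult b p"
  by (rule poly_mapping_eqI) (simp add: lookup_minus algebra_simps)
lemma npsmult_add: "npsmult c (p + q) = npsmult c p + npsmult c q"
  by (rule poly_mapping_eqI) (simp add: lookup_add algebra_simps)
lemma npsmult_npsmult: "npsmult a (npsmult b p) = npsmult (a * b) p"
  by (rule poly_mapping_eqI) simp

lemma npmult_sum_left: "npmult (sum f S) r = (\<Sum>x\<in>S. npmult (f x) r)"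
  by (induction S rule: infinite_finite_induct) (simp_all add: npmult_add_left)
lemma npmult_sum_right: "npmult r (sum f S) = (\<Sum>x\<in>S. npmult r (f x))"
  by (induction S rule: infinite_finite_induct) (simp_all add: npmult_add_right)

lemma npeval_superset:
  assumes "finite S" "Poly_Mapping.keys p \<subseteq> S"
  shows "npeval s p = (\<Sum>m\<in>S. npsmult (Poly_Mapping.lookup p m) (nmon_eval s m))"
  unfolding npeval_def
  by (rule sum.mono_neutral_left) (use assms in \<open>auto simp: in_keys_iff\<close>)

lemma npeval_add: "npeval s (p + q) = npeval s p + npeval s q"
proof -
  let ?S = "Poly_Mapping.keys p \<union> Poly_Mapping.keys q"
  have f: "finite ?S" by simp
  have k: "Poly_Mapping.keys (p + q) \<subseteq> ?S" by (rule keys_add)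
  show ?thesis
    using npeval_superset[OF f k, of s] npeval_superset[OF f, of p s] npeval_superset[OF f, of q s]
    by (simp add: lookup_add npsmult_add_scalar sum.distrib)
qed

lemma npeval_diff: "npeval s (p - q) = npeval s p - npeval s q"
proof -
  let ?S = "Poly_Mapping.keys p \<union> Poly_Mapping.keys q"
  have f: "finite ?S" by simp
  have k: "Poly_Mapping.keys (p - q) \<subseteq> ?S"
    by (auto simp: in_keys_iff lookup_minus)
  show ?thesis
    using npeval_superset[OF f k, of s] npeval_superset[OF f, of p s] npeval_superset[OF f, of q s]
    by (simp add: lookup_minus npsmult_diff_scalar sum_subtractf)
qed

lemma npeval_zero [simp]: "npeval s 0 = 0" by (simp add: npeval_def)

lemma npeval_sum: "npeval s (sum f S) = (\<Sum>x\<in>S. npeval s (f x))"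
  by (induction S rule: infinite_finite_induct) (simp_all add: npeval_add)

lemma npeval_single: "npeval s (Poly_Mapping.single m c) = npsmult c (nmon_eval s m)"
  by (subst npeval_superset[of "{m}"]) (auto simp: lookup_single)

lemma npeval_npmult: "npeval s (npmult p q) = npmult (npeval s p) (npeval s q)"
proof -
  have "npeval s (npmult p q) =
    (\<Sum>x\<in>Poly_Mapping.keys p \<times> Poly_Mapping.keys q.
       npsmult (Poly_Mapping.lookup p (fst x) * Poly_Mapping.lookup q (snd x))
         (npmult (nmon_eval s (fst x)) (nmon_eval s (snd x))))"
    unfolding npmult_def[of p q] npeval_sum by (simp add: npeval_single case_prod_beta)
  also have "\<dots> = (\<Sum>a\<in>Poly_Mapping.keys p. \<Sum>b\<in>Poly_Mapping.keys q.
       npsmult (Poly_Mapping.lookup p a * Poly_Mapping.lookup q b)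
         (npmult (nmon_eval s a) (nmon_eval s b)))"
    by (simp add: sum.cartesian_product case_prod_beta)
  also have "\<dots> = npmult (npeval s p) (npeval s q)"
    unfolding npeval_def npmult_sum_left npmult_sum_right
    by (simp add: npmult_smult_left npmult_smult_right npsmult_npsmult mult.commute sum.swap[of _ "Poly_Mapping.keys q"])
  finally show ?thesis .
qed

lemma npeval_npassoc:
  "npeval s (npassoc a b c) = npassoc (npeval s a) (npeval s b) (npeval s c)"
  by (simp add: npassoc_def npeval_diff npeval_npmult)





lemma keys_npmult: "m \<in> Poly_Mapping.keys (npmult p q) \<Longrightarrow>
   \<exists>a b. m = NMul a b \<and> a \<in> Poly_Mapping.keys p \<and> b \<in> Poly_Mapping.keys q"
  by (cases m) (auto simp: in_keys_iff)

lemma npvars_npmult: "npvars (npmult p q) \<subseteq> npvars p \<union> npvars q"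
proof
  fix x assume "x \<in> npvars (npmult p q)"
  then obtain m where m: "m \<in> Poly_Mapping.keys (npmult p q)" "x \<in> nmon_vars m"
    unfolding npvars_def by blast
  obtain a b where ab: "m = NMul a b" "a \<in> Poly_Mapping.keys p" "b \<in> Poly_Mapping.keys q"
    using keys_npmult[OF m(1)] by blast
  have "x \<in> nmon_vars a \<or> x \<in> nmon_vars b" using m(2) ab(1) by simp
  then show "x \<in> npvars p \<union> npvars q" using ab unfolding npvars_def by blast
qed

lemma npvars_diff: "npvars (p - q) \<subseteq> npvars p \<union> npvars q"
proof -
  have "Poly_Mapping.keys (p - q) \<subseteq> Poly_Mapping.keys p \<union> Poly_Mapping.keys q"
  proof
    fix m assume "m \<in> Poly_Mapping.keys (p - q)"
    then have "Poly_Mapping.lookup p m - Poly_Mapping.lookup q m \<noteq> 0"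
      by (simp add: in_keys_iff lookup_minus)
    then show "m \<in> Poly_Mapping.keys p \<union> Poly_Mapping.keys q"
      by (cases "Poly_Mapping.lookup p m = 0") (simp_all add: in_keys_iff)
  qed
  then show ?thesis unfolding npvars_def by blast
qed

lemma npvars_npassoc: "npvars (npassoc a b c) \<subseteq> npvars a \<union> npvars b \<union> npvars c"
proof -
  have 1: "npvars (npmult (npmult a b) c) \<subseteq> npvars a \<union> npvars b \<union> npvars c"
    using npvars_npmult[of "npmult a b" c] npvars_npmult[of a b] by blast
  have 2: "npvars (npmult a (npmult b c)) \<subseteq> npvars a \<union> npvars b \<union> npvars c"
    using npvars_npmult[of a "npmult b c"] npvars_npmult[of b c] by blast
  show ?thesis unfolding npassoc_def
    using npvars_diff[of "npmult (npmult a b) c" "npmult a (npmult b c)"] 1 2 by blast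
qed

lemma V_lin:
  assumes "p \<in> veronese2"
  shows "lin p u = 0"
proof -
  obtain q where q: "p - q \<in> alt_ideal" "\<forall>m \<in> Poly_Mapping.keys q. even (nmon_deg m)"
    using assms unfolding veronese2_def by blast
  have "lin (p - q) u = 0" using I_lowdeg[OF q(1)] by blast
  moreover have "lin q u = 0"
  proof (rule ccontr)
    assume "lin q u \<noteq> 0"
    then have "NVar u \<in> Poly_Mapping.keys q" unfolding lin_def by (simp add: in_keys_iff)
    then show False using q(2) by fastforce
  qed
  ultimately show ?thesis by simp
qed

lemma nmon_lin_zero:
  assumes "nmon_vars m \<subseteq> G" "\<forall>g\<in>G. \<forall>a. lin g a = 0"
  shows "lin (nmon_eval (\<lambda>v. v) m) a = 0"
  using assms by (cases m) auto

fun pq :: "var3 \<Rightarrow> var3 \<times> var3" where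
  "pq X = (X, X)" | "pq Y = (X, Y)" | "pq Z = (Y, Y)"

definition sfun :: "('k::field, var3) npoly \<Rightarrow> ('k, var3) npoly" where
  "sfun g = npsmult (quad g X X) (npvar X) + npsmult (quad g X Y) (npvar Y)
          + npsmult (quad g Y Y) (npvar Z)"

lemma lin_npvar: "lin (npvar a :: ('k::field, 'v) npoly) u = (if a = u then 1 else 0)"
  by (simp add: lin_def npvar_def lookup_single when_def)

lemma lin_sfun: "lin (sfun g) u = quad g (fst (pq u)) (snd (pq u))"
  by (cases u) (simp_all add: sfun_def lin_npvar)

lemma lin_sum: "lin (sum f S) u = (\<Sum>x\<in>S. lin (f x) u)"
  by (simp add: lin_def lookup_sum)
lemma quad_sum: "quad (sum f S) a b = (\<Sum>x\<in>S. quad (f x) a b)"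
  by (simp add: quad_def lookup_sum)

lemma lin_eval_sfun:
  assumes "npvars f \<subseteq> G" "\<forall>g\<in>G. \<forall>a. lin g a = 0"
  shows "lin (npeval sfun f) u = quad (npeval (\<lambda>v. v) f) (fst (pq u)) (snd (pq u))"
proof -
  have key: "lin (nmon_eval sfun m) u = quad (nmon_eval (\<lambda>v. v) m) (fst (pq u)) (snd (pq u))"
    if "m \<in> Poly_Mapping.keys f" for m
  proof -
    have mv: "nmon_vars m \<subseteq> G" using assms(1) that unfolding npvars_def by blast
    show ?thesis
    proof (cases m)
      case (NVar g)
      then show ?thesis by (simp add: lin_sfun)
    next
      case (NMul a b)
      then show ?thesis using nmon_lin_zero[OF _ assms(2), of a] nmon_lin_zero[OF _ assms(2), of b] mv
        by simp
    qed
  qed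
  show ?thesis
    unfolding npeval_def lin_sum quad_sum lin_smult quad_smult
    by (intro sum.cong refl) (simp only: key)
qed




lemma npmult_vars_in_V:
  "npmult (npvar a) (npvar b) \<in> (veronese2 :: ('k::field, var3) npoly set)"
proof -
  have "\<forall>m \<in> Poly_Mapping.keys (npmult (npvar a) (npvar b) :: ('k, var3) npoly). even (nmon_deg m)"
  proof
    fix m assume "m \<in> Poly_Mapping.keys (npmult (npvar a) (npvar b) :: ('k, var3) npoly)"
    then obtain c d where "m = NMul c d" "c \<in> Poly_Mapping.keys (npvar a :: ('k, var3) npoly)"
      "d \<in> Poly_Mapping.keys (npvar b :: ('k, var3) npoly)"
      by (blast dest: keys_npmult)
    then show "even (nmon_deg m)" by (simp add: npvar_def)
  qed
  then show ?thesis unfolding veronese2_def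
    by (intro CollectI exI[of _ "npmult (npvar a) (npvar b)"]) (simp add: alt_ideal.zero)
qed

theorem proposition2:
  shows "\<not> free_in_Alt3 (veronese2 :: ('k::field, var3) npoly set)"
proof
  assume "free_in_Alt3 (veronese2 :: ('k::field, var3) npoly set)"
  then obtain G :: "('k, var3) npoly set" where
    GV: "G \<subseteq> veronese2" and
    gen: "\<forall>p \<in> veronese2. \<exists>f :: ('k, ('k, var3) npoly) npoly.
            npvars f \<subseteq> G \<and> p - npeval (\<lambda>v. v) f \<in> alt_ideal" and
    inj: "\<forall>f :: ('k, ('k, var3) npoly) npoly.
            npvars f \<subseteq> G \<longrightarrow> npeval (\<lambda>v. v) f \<in> alt_ideal \<longrightarrow> Alt3_identity f"
    unfolding free_in_Alt3_def by blast
  have Glin: "\<forall>g\<in>G. \<forall>a. lin g a = 0"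
  proof (intro ballI allI)
    fix g a assume "g \<in> G"
    then have "g \<in> veronese2" using GV by blast
    then show "lin g a = 0" by (rule V_lin)
  qed
  define v1 :: "('k, var3) npoly" where "v1 = npmult (npvar X) (npvar X)"
  define v2 :: "('k, var3) npoly" where "v2 = npmult (npvar X) (npvar Y)"
  define v3 :: "('k, var3) npoly" where "v3 = npmult (npvar Y) (npvar Y)"
  obtain f1 where f1: "npvars f1 \<subseteq> G" "v1 - npeval (\<lambda>v. v) f1 \<in> alt_ideal"
    using gen npmult_vars_in_V unfolding v1_def by blast
  obtain f2 where f2: "npvars f2 \<subseteq> G" "v2 - npeval (\<lambda>v. v) f2 \<in> alt_ideal"
    using gen npmult_vars_in_V unfolding v2_def by blast
  obtain f3 where f3: "npvars f3 \<subseteq> G" "v3 - npeval (\<lambda>v. v) f3 \<in> alt_ideal"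
    using gen npmult_vars_in_V unfolding v3_def by blast
  define F where "F = npassoc f1 f2 f3"
  have FG: "npvars F \<subseteq> G" unfolding F_def
    using npvars_npassoc[of f1 f2 f3] f1(1) f2(1) f3(1) by blast
  define e1 where "e1 = npeval (\<lambda>v. v) f1"
  define e2 where "e2 = npeval (\<lambda>v. v) f2"
  define e3 where "e3 = npeval (\<lambda>v. v) f3"
  have cong: "npassoc v1 v2 v3 - npassoc e1 e2 e3 \<in> alt_ideal"
  proof -
    define d1 where "d1 = v1 - e1"
    define d2 where "d2 = v2 - e2"
    define d3 where "d3 = v3 - e3"
    have d: "d1 \<in> I" "d2 \<in> I" "d3 \<in> I" using f1 f2 f3 unfolding d1_def d2_def d3_def e1_def e2_def e3_def by auto
    have "npassoc v1 v2 v3 - npassoc e1 e2 e3 =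
      npmult (npmult d1 v2) v3 + npmult (npmult e1 d2) v3 + npmult (npmult e1 e2) d3
      - npmult d1 (npmult v2 v3) - npmult e1 (npmult d2 v3) - npmult e1 (npmult e2 d3)"
      unfolding d1_def d2_def d3_def by (simp add: npassoc_def npmult_distribs algebra_simps)
    then show ?thesis using d by (simp only:) (intro I_add I_diff I_ml I_mr)
  qed
  have art: "npassoc v1 v2 v3 \<in> alt_ideal"
    unfolding v1_def v2_def v3_def by (rule artin_inst)
  have "npeval (\<lambda>v. v) F \<in> alt_ideal"
  proof -
    have "npeval (\<lambda>v. v) F = npassoc v1 v2 v3 - (npassoc v1 v2 v3 - npassoc e1 e2 e3)"
      unfolding F_def e1_def e2_def e3_def by (simp add: npeval_npassoc)
    also have "\<dots> \<in> alt_ideal" by (rule I_diff[OF art cong])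
    finally show ?thesis .
  qed
  then have "Alt3_identity F" using inj FG by blast
  then have "npeval sfun F \<in> alt_ideal" unfolding Alt3_identity_def by blast
  then have D0: "Dfun (npeval sfun F) = 0" by (rule I_lowdeg[THEN conjunct2, THEN conjunct2])
  have qe: "quad e1 a b = quad v1 a b" "quad e2 a b = quad v2 a b" "quad e3 a b = quad v3 a b" for a b
    using I_lowdeg[OF f1(2)] I_lowdeg[OF f2(2)] I_lowdeg[OF f3(2)]
    unfolding e1_def e2_def e3_def by auto
  have l1: "lin (npeval sfun f1) u = quad v1 (fst (pq u)) (snd (pq u))" for u
    using lin_eval_sfun[OF f1(1) Glin] qe unfolding e1_def by simp
  have l2: "lin (npeval sfun f2) u = quad v2 (fst (pq u)) (snd (pq u))" for u
    using lin_eval_sfun[OF f2(1) Glin] qe unfolding e2_def by simp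
  have l3: "lin (npeval sfun f3) u = quad v3 (fst (pq u)) (snd (pq u))" for u
    using lin_eval_sfun[OF f3(1) Glin] qe unfolding e3_def by simp
  have "Dfun (npeval sfun F) = 1"
    unfolding F_def npeval_npassoc Dfun_npassoc l1 l2 l3
    by (simp add: v1_def v2_def v3_def lin_npvar)
  with D0 show False by simp
qed

end
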